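(* Let $n\ge2$ and let $\{X_i\}_{i\in I}$ be an exhausting family of finite fully characteristic based covers of $R_n$, corresponding to subgroups $K_i=\pi_1(X_i)\le F_n$. Let $\phi\in\mathrm{End}(F_n)$ with $\phi\ne\mathrm{id}_{F_n}$. Then for some $i\in I$ the endomorphism of $H_1(X_i,\mathbb{Z})$ induced by $\phi$ is not the identity.
   Context: $F_n$ is the free group of rank $n\ge2$, identified with $\pi_1(R_n,* )$ where $R_n$ is the wedge of $n$ circles. A subgroup $K\le F_n$ is fully characteristic if $\phi(K)\subseteq K$ for all $\phi\in\mathrm{End}(F_n)$. A finite fully characteristic based cover is the connected covering $(X,x_1)\to(R_n,* )$ corresponding to a finite-index fully characteristic subgroup $K$. The family is exhausting if every $1\ne w\in F_n$ has nontrivial image in some quotient $F_n/K_i$ (i.e. $\bigcap_i K_i=\{1\}$). The endomorphism of $H_1(X_i,\mathbb{Z})\cong K_i^{ab}$ induced by $\phi$ is the abelianization of $\phi|_{K_i}$. *)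

theory Defs
  imports "HOL-Algebra.Algebra"
begin

text \<open>Free group F_n of rank n, modelled by freely reduced words.
  A letter (i, True) is the generator x_i, (i, False) is its inverse.\<close>

type_synonym gen = "nat \<times> bool"

definition cancels :: "gen \<Rightarrow> gen \<Rightarrow> bool" where
  "cancels x y \<longleftrightarrow> fst x = fst y \<and> snd x \<noteq> snd y"

fun red :: "gen list \<Rightarrow> gen list" where
  "red [] = []"
| "red (x # xs) = (case red xs of [] \<Rightarrow> [x]
                     | y # ys \<Rightarrow> (if cancels x y then ys else x # y # ys))"

definition reduced :: "gen list \<Rightarrow> bool" where
  "reduced w \<longleftrightarrow> (\<forall>i. Suc i < length w \<longrightarrow> \<not> cancels (w ! i) (w ! Suc i))"

definition free_group :: "nat \<Rightarrow> gen list monoid" where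
  "free_group n = \<lparr>carrier = {w. reduced w \<and> (\<forall>x\<in>set w. fst x < n)},
                   monoid.mult = (\<lambda>a b. red (a @ b)), one = []\<rparr>"

definition fully_characteristic :: "('a, 'b) monoid_scheme \<Rightarrow> 'a set \<Rightarrow> bool" where
  "fully_characteristic G K \<longleftrightarrow> subgroup K G \<and> (\<forall>\<phi> \<in> hom G G. \<phi> ` K \<subseteq> K)"

definition finite_index :: "('a, 'b) monoid_scheme \<Rightarrow> 'a set \<Rightarrow> bool" where
  "finite_index G K \<longleftrightarrow> finite (rcosets\<^bsub>G\<^esub> K)"

definition abelianization :: "('a, 'b) monoid_scheme \<Rightarrow> 'a set monoid" where
  "abelianization G = G Mod (derived G (carrier G))"

text \<open>Endomorphism of K^ab (= H_1 of the cover) induced by phi restricted to K: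
  a coset C of [K,K] in K is sent to the coset of phi(k) for any k in C.\<close>
definition induced_ab_endo ::
  "('a, 'b) monoid_scheme \<Rightarrow> 'a set \<Rightarrow> ('a \<Rightarrow> 'a) \<Rightarrow> 'a set \<Rightarrow> 'a set" where
  "induced_ab_endo G K \<phi> =
     (let H = G\<lparr>carrier := K\<rparr>; D = derived H (carrier H)
      in (\<lambda>C \<in> carrier (abelianization H). D #>\<^bsub>H\<^esub> \<phi> (SOME k. k \<in> C)))"

end

theory Submission
  imports Defs
begin

definition push :: "gen \<Rightarrow> gen list \<Rightarrow> gen list" where
  "push x w = (case w of [] \<Rightarrow> [x] | y # ys \<Rightarrow> (if cancels x y then ys else x # y # ys))"

lemma red_Cons: "red (x # xs) = push x (red xs)"
  by (simp add: push_def)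

declare red.simps(2)[simp del]

lemma reduced_Nil[simp]: "reduced []" by (simp add: reduced_def)

lemma reduced_Cons: "reduced (x # w) \<longleftrightarrow> reduced w \<and> (w = [] \<or> \<not> cancels x (hd w))"
proof
  assume r: "reduced (x # w)"
  have "reduced w" unfolding reduced_def
  proof (intro allI impI)
    fix i assume "Suc i < length w"
    then show "\<not> cancels (w ! i) (w ! Suc i)" using r[unfolded reduced_def, rule_format, of "Suc i"] by simp
  qed
  moreover have "w = [] \<or> \<not> cancels x (hd w)"
    using r[unfolded reduced_def, rule_format, of 0] by (cases w) auto
  ultimately show "reduced w \<and> (w = [] \<or> \<not> cancels x (hd w))" by blast
next
  assume r: "reduced w \<and> (w = [] \<or> \<not> cancels x (hd w))"
  show "reduced (x # w)" unfolding reduced_def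
  proof (intro allI impI)
    fix i assume i: "Suc i < length (x # w)"
    show "\<not> cancels ((x # w) ! i) ((x # w) ! Suc i)"
    proof (cases i)
      case 0 then show ?thesis using r i by (cases w) auto
    next
      case (Suc j) then show ?thesis using r i unfolding reduced_def by auto
    qed
  qed
qed

lemma reduced_Cons_Cons: "reduced (x # y # w) \<longleftrightarrow> \<not> cancels x y \<and> reduced (y # w)"
  by (auto simp: reduced_Cons)

lemma reduced_push: "reduced w \<Longrightarrow> reduced (push x w)"
  by (cases w) (auto simp: push_def reduced_Cons)

lemma reduced_red: "reduced (red w)"
  by (induction w) (auto simp: red_Cons reduced_push)

lemma red_reduced: "reduced w \<Longrightarrow> red w = w"
proof (induction w)
  case Nil then show ?case by simp
next
  case (Cons x w)
  then have "reduced w" "w = [] \<or> \<not> cancels x (hd w)" by (auto simp: reduced_Cons)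
  then show ?case using Cons by (cases w) (auto simp: red_Cons push_def)
qed

lemma cancels_sym: "cancels x y \<Longrightarrow> cancels y x" by (auto simp: cancels_def)
lemma cancels_trans: "cancels x y \<Longrightarrow> cancels y z \<Longrightarrow> x = z"
  by (cases x; cases y; cases z) (auto simp: cancels_def)

lemma push_push_cancel: "cancels x y \<Longrightarrow> reduced w \<Longrightarrow> push x (push y w) = w"
proof (cases w)
  case Nil
  assume "cancels x y" then show ?thesis using Nil by (simp add: push_def)
next
  case (Cons z u)
  assume c: "cancels x y" and r: "reduced w"
  show ?thesis
  proof (cases "cancels y z")
    case True
    then have "x = z" using c cancels_trans by blast
    then show ?thesis using Cons True r by (cases u) (auto simp: push_def reduced_Cons)
  next
    case False then show ?thesis using Cons c by (simp add: push_def)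
  qed
qed

lemma red_append: "red (xs @ ys) = foldr push xs (red ys)"
  by (induction xs) (auto simp: red_Cons)

lemma reduced_foldr_push: "reduced r \<Longrightarrow> reduced (foldr push u r)"
  by (induction u) (auto simp: reduced_push)

lemma foldr_push_push: "reduced u \<Longrightarrow> reduced r \<Longrightarrow> foldr push (push x u) r = push x (foldr push u r)"
proof (cases u)
  case Nil then show ?thesis by (simp add: push_def)
next
  case (Cons y u')
  assume ru: "reduced u" and rr: "reduced r"
  show ?thesis
  proof (cases "cancels x y")
    case True
    then have "push x (foldr push u r) = push x (push y (foldr push u' r))" using Cons by simp
    also have "\<dots> = foldr push u' r" using push_push_cancel[OF True] reduced_foldr_push[OF rr] by simp
    finally show ?thesis using True Cons by (simp add: push_def)
  next
    case False then show ?thesis using Cons by (simp add: push_def)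
  qed
qed

lemma foldr_push_red: "reduced r \<Longrightarrow> foldr push (red xs) r = foldr push xs r"
  by (induction xs) (auto simp: red_Cons foldr_push_push reduced_red)

lemma red_red_left[simp]: "red (red a @ b) = red (a @ b)"
  by (simp add: red_append foldr_push_red reduced_red)

lemma red_red[simp]: "red (red a) = red a"
  by (simp add: red_reduced reduced_red)

lemma red_red_right[simp]: "red (a @ red b) = red (a @ b)"
  by (simp add: red_append)

lemma set_push: "set (push x w) \<subseteq> insert x (set w)"
  by (cases w) (auto simp: push_def)

lemma set_red: "set (red w) \<subseteq> set w"
  by (induction w) (use set_push in \<open>fastforce simp: red_Cons\<close>)+

definition finv :: "gen list \<Rightarrow> gen list" where
  "finv w = rev (map (\<lambda>(i, b). (i, \<not> b)) w)"

lemma finv_Cons: "finv (x # w) = finv w @ [(fst x, \<not> snd x)]"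
  by (cases x) (simp add: finv_def)

lemma red_cancel_pair: "cancels x y \<Longrightarrow> red (x # y # w) = red w"
  by (simp add: red_Cons push_push_cancel reduced_red)

lemma red_finv_l: "red (finv w @ w) = []"
proof (induction w)
  case Nil then show ?case by (simp add: finv_def)
next
  case (Cons x w)
  have "red (finv (x # w) @ x # w) = red (finv w @ red ((fst x, \<not> snd x) # x # w))"
    by (simp add: finv_Cons)
  also have "red ((fst x, \<not> snd x) # x # w) = red w"
    by (rule red_cancel_pair) (simp add: cancels_def)
  finally show ?case using Cons by simp
qed

lemma finv_finv: "finv (finv w) = w"
  by (simp add: finv_def rev_map comp_def case_prod_beta)

lemma red_finv_r: "red (w @ finv w) = []"
  using red_finv_l[of "finv w"] by (simp add: finv_finv)

lemma set_finv: "x \<in> set (finv w) \<Longrightarrow> fst x \<in> fst ` set w"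
  by (force simp: finv_def)

lemma carrier_fg: "w \<in> carrier (free_group n) \<longleftrightarrow> reduced w \<and> (\<forall>x\<in>set w. fst x < n)"
  by (simp add: free_group_def)

lemma mult_fg[simp]: "a \<otimes>\<^bsub>free_group n\<^esub> b = red (a @ b)"
  by (simp add: free_group_def)

lemma one_fg[simp]: "\<one>\<^bsub>free_group n\<^esub> = []"
  by (simp add: free_group_def)

lemma group_fg: "group (free_group n)"
proof (rule groupI)
  fix x y assume "x \<in> carrier (free_group n)" "y \<in> carrier (free_group n)"
  then show "x \<otimes>\<^bsub>free_group n\<^esub> y \<in> carrier (free_group n)"
    using set_red[of "x @ y"] by (auto simp: carrier_fg reduced_red)
next
  show "\<one>\<^bsub>free_group n\<^esub> \<in> carrier (free_group n)" by (simp add: carrier_fg)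
next
  fix x y z
  show "x \<otimes>\<^bsub>free_group n\<^esub> y \<otimes>\<^bsub>free_group n\<^esub> z = x \<otimes>\<^bsub>free_group n\<^esub> (y \<otimes>\<^bsub>free_group n\<^esub> z)"
    by simp
next
  fix x assume "x \<in> carrier (free_group n)"
  then show "\<one>\<^bsub>free_group n\<^esub> \<otimes>\<^bsub>free_group n\<^esub> x = x" by (simp add: carrier_fg red_reduced)
next
  fix x assume x: "x \<in> carrier (free_group n)"
  have "red (finv x) \<in> carrier (free_group n)"
    using x set_red[of "finv x"] set_finv[of _ x] by (fastforce simp: carrier_fg reduced_red)
  moreover have "red (finv x) \<otimes>\<^bsub>free_group n\<^esub> x = \<one>\<^bsub>free_group n\<^esub>"
    by (simp add: red_finv_l)
  ultimately show "\<exists>y\<in>carrier (free_group n). y \<otimes>\<^bsub>free_group n\<^esub> x = \<one>\<^bsub>free_group n\<^esub>" by blast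
qed

lemma inv_fg: assumes "x \<in> carrier (free_group n)" shows "inv\<^bsub>free_group n\<^esub> x = red (finv x)"
proof -
  interpret group "free_group n" by (rule group_fg)
  have c: "red (finv x) \<in> carrier (free_group n)"
    using assms set_red[of "finv x"] set_finv[of _ x] by (fastforce simp: carrier_fg reduced_red)
  have "red (finv x) \<otimes>\<^bsub>free_group n\<^esub> x = \<one>\<^bsub>free_group n\<^esub>" by (simp add: red_finv_l)
  then show ?thesis using inv_equality[OF _ assms c] by simp
qed



definition same :: "gen list set \<Rightarrow> gen list \<Rightarrow> gen list \<Rightarrow> bool" where
  "same K a b \<longleftrightarrow> red (a @ finv b) \<in> K"

fun cnt :: "gen list set \<Rightarrow> gen list \<Rightarrow> nat \<Rightarrow> gen list \<Rightarrow> gen list \<Rightarrow> int" where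
  "cnt K c j s [] = 0"
| "cnt K c j s (x # w) = (if x = (j, True) \<and> same K s c then 1 else 0)
      - (if x = (j, False) \<and> same K (red (s @ [x])) c then 1 else 0) + cnt K c j (red (s @ [x])) w"

lemma red_assoc_list: "red (red (s @ a) @ b) = red (s @ a @ b)"
  by (metis append.assoc red_red_left)

lemma same_red[simp]: "same K (red s) c = same K s c"
  by (simp add: same_def)

lemma cnt_cong:
  assumes "\<forall>x\<in>set w. fst x < n"
    and "\<And>p. \<forall>x\<in>set p. fst x < n \<Longrightarrow> same K (red (s1 @ p)) c1 = same K (red (s2 @ p)) c2"
  shows "cnt K c1 j s1 w = cnt K c2 j s2 w"
  using assms
proof (induction w arbitrary: s1 s2)
  case Nil then show ?case by simp
next
  case (Cons x w)
  have e0: "same K s1 c1 = same K s2 c2" using Cons.prems(2)[of "[]"] by simp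
  have e1: "same K (red (s1 @ [x])) c1 = same K (red (s2 @ [x])) c2" using Cons.prems by simp
  have "cnt K c1 j (red (s1 @ [x])) w = cnt K c2 j (red (s2 @ [x])) w"
  proof (rule Cons.IH)
    show "\<forall>x\<in>set w. fst x < n" using Cons.prems by simp
    fix p :: "gen list" assume p: "\<forall>x\<in>set p. fst x < n"
    show "same K (red (red (s1 @ [x]) @ p)) c1 = same K (red (red (s2 @ [x]) @ p)) c2"
      using Cons.prems(2)[of "x # p"] p Cons.prems(1) by (simp add: red_assoc_list)
  qed
  then show ?case using e0 e1 by simp
qed

lemma red_cancel_mid: "cancels x y \<Longrightarrow> red (s @ x # y # t) = red (s @ t)"
  by (simp add: red_append red_cancel_pair)

lemma cnt_push: "cnt K c j s (push x u) = cnt K c j s (x # u)"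
proof (cases u)
  case Nil then show ?thesis by (simp add: push_def)
next
  case (Cons y u')
  show ?thesis
  proof (cases "cancels x y")
    case False then show ?thesis using Cons by (simp add: push_def)
  next
    case True
    have r: "red (red (s @ [x]) @ [y]) = red s"
      using red_cancel_mid[OF True, of s "[]"] by (simp add: red_assoc_list)
    have "cnt K c j (red s) u' = cnt K c j s u'"
    proof -
      have "\<And>p. same K (red (red s @ p)) c = same K (red (s @ p)) c" by simp
      then show ?thesis
        using cnt_cong[of "u'" "Suc (Max (fst ` set u'))" K "red s" c s c j]
        by (simp add: le_imp_less_Suc)
    qed
    moreover have "(if x = (j, True) \<and> same K s c then 1 else 0)
      - (if x = (j, False) \<and> same K (red (s @ [x])) c then 1 else (0::int))
      + ((if y = (j, True) \<and> same K (red (s @ [x])) c then 1 else 0)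
      - (if y = (j, False) \<and> same K (red (red (s @ [x]) @ [y])) c then 1 else 0)) = 0"
    proof -
      have rA: "same K (red (red (s @ [x]) @ [y])) c = same K s c" using r by simp
      show ?thesis unfolding rA using True by (cases x; cases y) (auto simp: cancels_def simp del: same_red)
    qed
    moreover have "cnt K c j s (x # y # u') = ((if x = (j, True) \<and> same K s c then 1 else 0)
      - (if x = (j, False) \<and> same K (red (s @ [x])) c then 1 else (0::int))
      + ((if y = (j, True) \<and> same K (red (s @ [x])) c then 1 else 0)
      - (if y = (j, False) \<and> same K (red (red (s @ [x]) @ [y])) c then 1 else 0)))
      + cnt K c j (red s) u'"
      by (simp only: cnt.simps r)
    moreover have "push x u = u'" using Cons True by (simp add: push_def)
    ultimately show ?thesis using Cons by simp
  qed
qed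

lemma cnt_red: "cnt K c j s (red w) = cnt K c j s w"
proof (induction w arbitrary: s)
  case Nil then show ?case by simp
next
  case (Cons x w)
  show ?case by (simp add: red_Cons cnt_push Cons.IH)
qed

lemma cnt_append: "cnt K c j s (a @ b) = cnt K c j s a + cnt K c j (red (s @ a)) b"
proof (induction a arbitrary: s)
  case Nil
  have "cnt K c j (red s) b = cnt K c j s b"
  proof -
    have "\<And>p. same K (red (red s @ p)) c = same K (red (s @ p)) c" by simp
    then show ?thesis
      using cnt_cong[of "b" "Suc (Max (fst ` set b))" K "red s" c s c j]
      by (simp add: le_imp_less_Suc)
  qed
  then show ?case by simp
next
  case (Cons x a)
  show ?case by (simp add: Cons.IH red_assoc_list)
qed



lemma red_carrier: "\<forall>x\<in>set p. fst x < n \<Longrightarrow> red p \<in> carrier (free_group n)"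
  using set_red[of p] by (auto simp: carrier_fg reduced_red)

lemma carrier_letters: "w \<in> carrier (free_group n) \<Longrightarrow> \<forall>x\<in>set w. fst x < n"
  by (simp add: carrier_fg)

lemma carrier_red_id: "w \<in> carrier (free_group n) \<Longrightarrow> red w = w"
  by (simp add: carrier_fg red_reduced)

locale fgk =
  fixes n :: nat and K :: "gen list set"
  assumes sub: "subgroup K (free_group n)"
begin

abbreviation "G \<equiv> free_group n"

sublocale G: group G by (rule group_fg)

declare mult_fg[simp del]

lemma Nil_mult[simp]: "y \<in> carrier G \<Longrightarrow> [] \<otimes>\<^bsub>G\<^esub> y = y"
  using G.l_one by simp
lemma mult_Nil[simp]: "y \<in> carrier G \<Longrightarrow> y \<otimes>\<^bsub>G\<^esub> [] = y"
  using G.r_one by simp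
lemma inv_Nil[simp]: "inv\<^bsub>G\<^esub> [] = []"
  using G.inv_one by simp

lemma inv_cancel_left: "g \<in> carrier G \<Longrightarrow> y \<in> carrier G \<Longrightarrow> inv\<^bsub>G\<^esub> g \<otimes>\<^bsub>G\<^esub> (g \<otimes>\<^bsub>G\<^esub> y) = y"
  by (simp add: G.m_assoc[symmetric])
lemma inv_cancel_left2: "g \<in> carrier G \<Longrightarrow> y \<in> carrier G \<Longrightarrow> g \<otimes>\<^bsub>G\<^esub> (inv\<^bsub>G\<^esub> g \<otimes>\<^bsub>G\<^esub> y) = y"
  by (simp add: G.m_assoc[symmetric])

lemma K_carrier: "k \<in> K \<Longrightarrow> k \<in> carrier G"
  by (rule subgroup.mem_carrier[OF sub])

lemma K_left:
  assumes a: "a \<in> K" and x: "x \<in> carrier G"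
  shows "a \<otimes>\<^bsub>G\<^esub> x \<in> K \<longleftrightarrow> x \<in> K"
proof
  assume ax: "a \<otimes>\<^bsub>G\<^esub> x \<in> K"
  have ac: "a \<in> carrier G" using a by (rule K_carrier)
  have e: "inv\<^bsub>G\<^esub> a \<otimes>\<^bsub>G\<^esub> (a \<otimes>\<^bsub>G\<^esub> x) = x"
    using ac x by (rule inv_cancel_left)
  have "inv\<^bsub>G\<^esub> a \<otimes>\<^bsub>G\<^esub> (a \<otimes>\<^bsub>G\<^esub> x) \<in> K"
    by (rule subgroup.m_closed[OF sub subgroup.m_inv_closed[OF sub a] ax])
  then show "x \<in> K" unfolding e .
next
  assume "x \<in> K" then show "a \<otimes>\<^bsub>G\<^esub> x \<in> K" by (rule subgroup.m_closed[OF sub a])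
qed

lemma same_iff: "a \<in> carrier G \<Longrightarrow> b \<in> carrier G \<Longrightarrow> same K a b \<longleftrightarrow> a \<otimes>\<^bsub>G\<^esub> inv\<^bsub>G\<^esub> b \<in> K"
  by (simp add: same_def inv_fg mult_fg)

lemma same_redp: "a \<in> carrier G \<Longrightarrow> c \<in> carrier G \<Longrightarrow> \<forall>x\<in>set p. fst x < n \<Longrightarrow>
   same K (red (a @ p)) c \<longleftrightarrow> (a \<otimes>\<^bsub>G\<^esub> red p) \<otimes>\<^bsub>G\<^esub> inv\<^bsub>G\<^esub> c \<in> K"
proof -
  assume a: "a \<in> carrier G" and c: "c \<in> carrier G" and p: "\<forall>x\<in>set p. fst x < n"
  have "red (a @ p) = a \<otimes>\<^bsub>G\<^esub> red p" by (simp add: mult_fg)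
  moreover have "a \<otimes>\<^bsub>G\<^esub> red p \<in> carrier G" using a red_carrier[OF p] by simp
  ultimately show ?thesis using same_iff c by metis
qed

lemma chi_add:
  assumes a: "a \<in> K" and b: "b \<in> K" and c: "c \<in> carrier G"
  shows "cnt K c j [] (a \<otimes>\<^bsub>G\<^esub> b) = cnt K c j [] a + cnt K c j [] b"
proof -
  have ac: "a \<in> carrier G" and bc: "b \<in> carrier G" using a b K_carrier by auto
  have "cnt K c j [] (a \<otimes>\<^bsub>G\<^esub> b) = cnt K c j [] a + cnt K c j a b"
    using cnt_append[of K c j "[]" a b] cnt_red[of K c j "[]" "a @ b"] carrier_red_id[OF ac] by (simp add: mult_fg)
  moreover have "cnt K c j a b = cnt K c j [] b"
  proof (rule cnt_cong[where n=n])
    show "\<forall>x\<in>set b. fst x < n" using carrier_letters[OF bc] .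
    fix p :: "gen list" assume p: "\<forall>x\<in>set p. fst x < n"
    have q: "red p \<in> carrier G" using red_carrier[OF p] .
    have "same K (red (a @ p)) c \<longleftrightarrow> a \<otimes>\<^bsub>G\<^esub> (red p \<otimes>\<^bsub>G\<^esub> inv\<^bsub>G\<^esub> c) \<in> K"
      using same_redp[OF ac c p] G.m_assoc[OF ac q G.inv_closed[OF c]] by simp
    also have "\<dots> \<longleftrightarrow> red p \<otimes>\<^bsub>G\<^esub> inv\<^bsub>G\<^esub> c \<in> K"
      using K_left[OF a] q c by simp
    also have "\<dots> \<longleftrightarrow> same K (red ([] @ p)) c"
      using same_redp[OF G.one_closed c p] q by simp
    finally show "same K (red (a @ p)) c = same K (red ([] @ p)) c" .
  qed
  ultimately show ?thesis by simp
qed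

end

locale fgkn = fgk +
  assumes cc: "\<And>x h. x \<in> carrier G \<Longrightarrow> h \<in> K \<Longrightarrow> x \<otimes>\<^bsub>G\<^esub> h \<otimes>\<^bsub>G\<^esub> inv\<^bsub>G\<^esub> x \<in> K"
begin

lemma translate:
  assumes s: "s \<in> carrier G" and c: "c \<in> carrier G" and w: "\<forall>x\<in>set w. fst x < n"
  shows "cnt K c j s w = cnt K (inv\<^bsub>G\<^esub> s \<otimes>\<^bsub>G\<^esub> c) j [] w"
proof (rule cnt_cong[OF w])
  fix p :: "gen list" assume p: "\<forall>x\<in>set p. fst x < n"
  have q: "red p \<in> carrier G" using red_carrier[OF p] .
  define x where "x = s \<otimes>\<^bsub>G\<^esub> red p \<otimes>\<^bsub>G\<^esub> inv\<^bsub>G\<^esub> c"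
  define y where "y = red p \<otimes>\<^bsub>G\<^esub> inv\<^bsub>G\<^esub> c \<otimes>\<^bsub>G\<^esub> s"
  have ic: "inv\<^bsub>G\<^esub> s \<otimes>\<^bsub>G\<^esub> c \<in> carrier G" using s c by simp
  have xc: "x \<in> carrier G" and yc: "y \<in> carrier G" using s c q by (simp_all add: x_def y_def)
  have xy: "y = inv\<^bsub>G\<^esub> s \<otimes>\<^bsub>G\<^esub> x \<otimes>\<^bsub>G\<^esub> inv\<^bsub>G\<^esub> (inv\<^bsub>G\<^esub> s)"
    using s c q by (simp add: x_def y_def G.m_assoc G.inv_inv inv_cancel_left)
  have yx: "x = s \<otimes>\<^bsub>G\<^esub> y \<otimes>\<^bsub>G\<^esub> inv\<^bsub>G\<^esub> s"
    using s c q by (simp add: x_def y_def G.m_assoc)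
  have "x \<in> K \<longleftrightarrow> y \<in> K"
  proof
    assume xK: "x \<in> K"
    show "y \<in> K" unfolding xy by (rule cc[OF G.inv_closed[OF s] xK])
  next
    assume yK: "y \<in> K"
    show "x \<in> K" unfolding yx by (rule cc[OF s yK])
  qed
  moreover have "same K (red (s @ p)) c \<longleftrightarrow> x \<in> K" using same_redp[OF s c p] by (simp add: x_def)
  moreover have "same K (red ([] @ p)) (inv\<^bsub>G\<^esub> s \<otimes>\<^bsub>G\<^esub> c) \<longleftrightarrow> y \<in> K"
    using same_redp[OF G.one_closed ic p] q s c by (simp add: y_def G.inv_mult_group G.m_assoc)
  ultimately show "same K (red (s @ p)) c = same K (red ([] @ p)) (inv\<^bsub>G\<^esub> s \<otimes>\<^bsub>G\<^esub> c)" by simp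
qed

lemma conj_cnt:
  assumes g: "g \<in> carrier G" and k: "k \<in> K" and c: "c \<in> carrier G"
  shows "cnt K c j [] (g \<otimes>\<^bsub>G\<^esub> k \<otimes>\<^bsub>G\<^esub> inv\<^bsub>G\<^esub> g) = cnt K c j g k"
proof -
  have kc: "k \<in> carrier G" using k K_carrier by blast
  have fl: "\<forall>x\<in>set (finv g). fst x < n" using carrier_letters[OF g] set_finv by fastforce
  have "g \<otimes>\<^bsub>G\<^esub> k \<otimes>\<^bsub>G\<^esub> inv\<^bsub>G\<^esub> g = red (g @ k @ finv g)"
    using g by (simp add: inv_fg red_assoc_list mult_fg)
  then have "cnt K c j [] (g \<otimes>\<^bsub>G\<^esub> k \<otimes>\<^bsub>G\<^esub> inv\<^bsub>G\<^esub> g)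
      = cnt K c j [] g + cnt K c j g k + cnt K c j (red (g @ k)) (finv g)"
    using cnt_red[of K c j "[]" "g @ k @ finv g"] cnt_append[of K c j "[]" g "k @ finv g"]
      cnt_append[of K c j g k "finv g"] carrier_red_id[OF g] by simp
  moreover have "cnt K c j (red (g @ k)) (finv g) = cnt K c j g (finv g)"
  proof (rule cnt_cong[OF fl])
    fix p :: "gen list" assume p: "\<forall>x\<in>set p. fst x < n"
    have q: "red p \<in> carrier G" using red_carrier[OF p] .
    have gk: "g \<otimes>\<^bsub>G\<^esub> k \<in> carrier G" using g kc by simp
    have gke: "red (g @ k) = g \<otimes>\<^bsub>G\<^esub> k" by (simp add: mult_fg)
    have e: "(g \<otimes>\<^bsub>G\<^esub> k) \<otimes>\<^bsub>G\<^esub> red p \<otimes>\<^bsub>G\<^esub> inv\<^bsub>G\<^esub> c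
        = (g \<otimes>\<^bsub>G\<^esub> k \<otimes>\<^bsub>G\<^esub> inv\<^bsub>G\<^esub> g) \<otimes>\<^bsub>G\<^esub> (g \<otimes>\<^bsub>G\<^esub> red p \<otimes>\<^bsub>G\<^esub> inv\<^bsub>G\<^esub> c)"
      using g kc q c by (simp add: G.m_assoc inv_cancel_left)
    have ck: "g \<otimes>\<^bsub>G\<^esub> k \<otimes>\<^bsub>G\<^esub> inv\<^bsub>G\<^esub> g \<in> K" using cc[OF g k] .
    have "(g \<otimes>\<^bsub>G\<^esub> k) \<otimes>\<^bsub>G\<^esub> red p \<otimes>\<^bsub>G\<^esub> inv\<^bsub>G\<^esub> c \<in> K \<longleftrightarrow> g \<otimes>\<^bsub>G\<^esub> red p \<otimes>\<^bsub>G\<^esub> inv\<^bsub>G\<^esub> c \<in> K"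
      unfolding e using K_left[OF ck] g q c by simp
    moreover have "same K (red (red (g @ k) @ p)) c \<longleftrightarrow> (g \<otimes>\<^bsub>G\<^esub> k) \<otimes>\<^bsub>G\<^esub> red p \<otimes>\<^bsub>G\<^esub> inv\<^bsub>G\<^esub> c \<in> K"
      using same_redp[OF gk c p] gke by simp
    moreover have "same K (red (g @ p)) c \<longleftrightarrow> g \<otimes>\<^bsub>G\<^esub> red p \<otimes>\<^bsub>G\<^esub> inv\<^bsub>G\<^esub> c \<in> K"
      using same_redp[OF g c p] by simp
    ultimately show "same K (red (red (g @ k) @ p)) c = same K (red (g @ p)) c" by simp
  qed
  moreover have "cnt K c j [] g + cnt K c j g (finv g) = 0"
  proof -
    have "cnt K c j [] g + cnt K c j g (finv g) = cnt K c j [] (g @ finv g)"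
      using cnt_append[of K c j "[]" g "finv g"] carrier_red_id[OF g] by simp
    also have "\<dots> = cnt K c j [] (red (g @ finv g))" by (simp add: cnt_red)
    also have "\<dots> = 0" by (simp add: red_finv_r)
    finally show ?thesis .
  qed
  ultimately show ?thesis by simp
qed

end


abbreviation xp :: "nat \<Rightarrow> nat \<Rightarrow> gen list" where "xp j t \<equiv> replicate t (j, True)"

lemma reduced_rep: "reduced (replicate t x)"
  by (induction t) (auto simp: reduced_Cons cancels_def)

lemma red_rep_app: "red (replicate a x @ replicate b x) = replicate (a + b) x"
  by (simp add: replicate_add[symmetric] red_reduced reduced_rep)

lemma cnt_rep: "cnt K c j (xp j u) (xp j t) = (\<Sum>v\<in>{u..<u+t}. if same K (xp j v) c then 1 else 0)"
proof (induction t arbitrary: u)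
  case 0 then show ?case by simp
next
  case (Suc t)
  have r: "red (xp j u @ [(j, True)]) = xp j (Suc u)"
    using red_rep_app[of u "(j,True)" 1] by simp
  have "cnt K c j (xp j u) (xp j (Suc t)) = (if same K (xp j u) c then 1 else 0) + cnt K c j (xp j (Suc u)) (xp j t)"
    by (simp add: r)
  also have "\<dots> = (\<Sum>v\<in>{u..<u + Suc t}. if same K (xp j v) c then 1 else 0)"
    using Suc.IH[of "Suc u"] by (simp add: sum.atLeast_Suc_lessThan)
  finally show ?case .
qed

lemma reduced_rep2:
  assumes "i \<noteq> j" shows "reduced (replicate a (i, True) @ replicate b (j, False))"
proof (induction a)
  case 0 then show ?case by (simp add: reduced_rep)
next
  case (Suc a)
  have "\<not> cancels (i, True) (hd (replicate a (i, True) @ replicate b (j, False)))"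
    if "replicate a (i, True) @ replicate b (j, False) \<noteq> []"
    using that assms by (cases a; cases b) (auto simp: cancels_def)
  then show ?case using Suc.IH unfolding replicate_Suc append_Cons reduced_Cons by blast
qed

lemma cnt_other: "\<forall>x\<in>set w. fst x \<noteq> j \<Longrightarrow> cnt K c j s w = 0"
  by (induction w arbitrary: s) auto

lemma sum_ind_one:
  fixes m :: nat
  assumes m: "0 < m" and p0: "P 0" and pv: "\<And>v. 0 < v \<Longrightarrow> v < m \<Longrightarrow> \<not> P v"
  shows "(\<Sum>v\<in>{0..<m}. if P v then 1 else 0 :: int) = 1"
proof -
  have "(\<Sum>v\<in>{0..<m}. if P v then 1 else 0 :: int) = (if P 0 then 1 else 0) + (\<Sum>v\<in>{Suc 0..<m}. if P v then 1 else 0)"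
    using m by (simp add: sum.atLeast_Suc_lessThan)
  also have "(\<Sum>v\<in>{Suc 0..<m}. if P v then 1 else 0 :: int) = 0"
    by (rule sum.neutral) (use pv in auto)
  finally show ?thesis using p0 by simp
qed

context fgkn
begin

lemma xp_carrier: "j < n \<Longrightarrow> xp j t \<in> carrier G"
  by (simp add: carrier_fg reduced_rep)

lemma xp_mult: "xp j a \<otimes>\<^bsub>G\<^esub> xp j b = xp j (a + b)"
  by (simp add: mult_fg red_rep_app)

lemma xp_div: assumes "j < n" "v \<le> a" shows "xp j a \<otimes>\<^bsub>G\<^esub> inv\<^bsub>G\<^esub> (xp j v) = xp j (a - v)"
proof -
  have "xp j a = xp j (a - v) \<otimes>\<^bsub>G\<^esub> xp j v" using assms by (simp add: xp_mult)
  then show ?thesis using xp_carrier[OF assms(1)] by (simp add: G.m_assoc)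
qed

lemma same_rcos: "u \<in> carrier G \<Longrightarrow> v \<in> carrier G \<Longrightarrow> same K u v \<longleftrightarrow> K #>\<^bsub>G\<^esub> u = K #>\<^bsub>G\<^esub> v"
  using same_iff subgroup.rcos_module[OF sub group_fg] G.repr_independence[OF _ _ sub]
    G.repr_independenceD[OF sub] by metis

lemma same_K: "u \<in> carrier G \<Longrightarrow> same K u [] \<longleftrightarrow> u \<in> K"
  using same_iff[of u "[]"] by (simp add: carrier_fg)

lemma Nil_K: "[] \<in> K"
  using subgroup.one_closed[OF sub] by simp

lemma same_Nil: "same K [] []"
  using Nil_K by (simp add: same_def finv_def)

lemma exists_power:
  assumes fi: "finite (rcosets\<^bsub>G\<^esub> K)" and j: "j < n"
  shows "\<exists>m>0. xp j m \<in> K"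
proof -
  define N where "N = card (rcosets\<^bsub>G\<^esub> K)"
  define f where "f t = K #>\<^bsub>G\<^esub> xp j t" for t
  have "f ` {0..N} \<subseteq> rcosets\<^bsub>G\<^esub> K"
    using G.rcosetsI[OF subgroup.subset[OF sub] xp_carrier[OF j]] by (auto simp: f_def)
  then have "card (f ` {0..N}) \<le> N" unfolding N_def using fi card_mono by blast
  then have "\<not> inj_on f {0..N}" using card_image by fastforce
  then obtain a b where ab: "a \<in> {0..N}" "b \<in> {0..N}" "a \<noteq> b" "f a = f b"
    unfolding inj_on_def by blast
  then have "same K (xp j (max a b)) (xp j (min a b))"
    using same_rcos[OF xp_carrier[OF j] xp_carrier[OF j]] by (auto simp: f_def max_def min_def)
  then have "xp j (max a b - min a b) \<in> K"
    using same_iff[OF xp_carrier[OF j] xp_carrier[OF j]] xp_div[OF j] by simp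
  then show ?thesis using ab(3) by (intro exI[of _ "max a b - min a b"]) auto
qed

lemma combinatorial:
  assumes fi: "finite (rcosets\<^bsub>G\<^esub> K)" and n2: "2 \<le> n"
    and h: "h \<in> carrier G" "h \<notin> K"
  shows "\<exists>k\<in>K. \<exists>j. cnt K [] j [] k \<noteq> cnt K h j [] k"
proof -
  have h0: "\<not> same K (xp j 0) h" for j
    using h same_rcos[OF G.one_closed h(1)] same_rcos[OF h(1) G.one_closed] same_K[OF h(1)]
    by (metis G.one_closed one_fg replicate_0)
  have gen: "\<exists>m>0. xp j m \<in> K \<and> (\<forall>v. 0 < v \<longrightarrow> v < m \<longrightarrow> xp j v \<notin> K)" if j: "j < n" for j
  proof -
    obtain m0 where "m0 > 0" "xp j m0 \<in> K" using exists_power[OF fi j] by blast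
    define m where "m = (LEAST m. 0 < m \<and> xp j m \<in> K)"
    have "0 < m \<and> xp j m \<in> K" unfolding m_def by (rule LeastI[of _ m0]) (use \<open>m0 > 0\<close> \<open>xp j m0 \<in> K\<close> in auto)
    moreover have "\<forall>v. 0 < v \<longrightarrow> v < m \<longrightarrow> xp j v \<notin> K"
      unfolding m_def using not_less_Least by blast
    ultimately show ?thesis by blast
  qed
  have caseA: "\<exists>k\<in>K. cnt K [] j [] k \<noteq> cnt K h j [] k"
    if j: "j < n" and m: "m > 0" "xp j m \<in> K" "\<forall>v. 0 < v \<longrightarrow> v < m \<longrightarrow> xp j v \<notin> K"
      and nA: "\<forall>t<m. \<not> same K (xp j t) h" for j m
  proof -
    have "cnt K [] j [] (xp j m) = 1"
      using cnt_rep[of K "[]" j 0 m] sum_ind_one[of m "\<lambda>v. same K (xp j v) []"] m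
        same_K[OF xp_carrier[OF j]] same_Nil by simp
    moreover have "cnt K h j [] (xp j m) = 0"
      using cnt_rep[of K h j 0 m] nA by simp
    ultimately show ?thesis using m(2) by (intro bexI[of _ "xp j m"]) auto
  qed
  obtain m1 where m1: "m1 > 0" "xp 0 m1 \<in> K" "\<forall>v. 0 < v \<longrightarrow> v < m1 \<longrightarrow> xp 0 v \<notin> K"
    using gen[of 0] n2 by auto
  obtain m2 where m2: "m2 > 0" "xp 1 m2 \<in> K" "\<forall>v. 0 < v \<longrightarrow> v < m2 \<longrightarrow> xp 1 v \<notin> K"
    using gen[of 1] n2 by auto
  show ?thesis
  proof (cases "\<forall>t<m1. \<not> same K (xp 0 t) h")
    case True then show ?thesis using caseA[of 0 m1] m1 n2 by auto
  next
    case False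
    then obtain a where a: "a < m1" "same K (xp 0 a) h" by blast
    show ?thesis
    proof (cases "\<forall>t<m2. \<not> same K (xp 1 t) h")
      case True then show ?thesis using caseA[of 1 m2] m2 n2 by auto
    next
      case False
      then obtain b where b: "b < m2" "same K (xp 1 b) h" by blast
      have c0: "xp 0 t \<in> carrier G" "xp 1 t \<in> carrier G" for t using xp_carrier n2 by auto
      have a0: "a > 0" using a h0 by (cases a) auto
      define y where "y = replicate b (1::nat, False)"
      define k where "k = xp 0 a @ y"
      have iy: "inv\<^bsub>G\<^esub> (xp 1 b) = y"
      proof -
        have "inv\<^bsub>G\<^esub> (xp 1 b) = red (finv (xp 1 b))" by (rule inv_fg[OF c0(2)])
        moreover have "finv (xp 1 b) = y" by (simp add: finv_def y_def)
        moreover have "red y = y" unfolding y_def by (rule red_reduced[OF reduced_rep])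
        ultimately show ?thesis by simp
      qed
      have k_eq: "k = xp 0 a \<otimes>\<^bsub>G\<^esub> inv\<^bsub>G\<^esub> (xp 1 b)"
      proof -
        have "reduced k"
          unfolding k_def y_def by (rule reduced_rep2) simp
        moreover have "xp 0 a \<otimes>\<^bsub>G\<^esub> inv\<^bsub>G\<^esub> (xp 1 b) = red (xp 0 a @ y)"
          by (simp only: iy mult_fg)
        ultimately show ?thesis by (simp add: red_reduced k_def)
      qed
      have "same K (xp 0 a) (xp 1 b)"
        using a(2) b(2) same_rcos c0 h(1) by metis
      then have kK: "k \<in> K" using same_iff c0 k_eq by simp
      have yo: "\<forall>x\<in>set y. fst x \<noteq> 0" by (simp add: y_def)
      have "cnt K c 0 [] k = cnt K c 0 [] (xp 0 a)" for c
        using cnt_append[of K c 0 "[]" "xp 0 a" y] cnt_other[OF yo] by (simp add: k_def)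
      moreover have "cnt K [] 0 [] (xp 0 a) = 1"
        using cnt_rep[of K "[]" 0 0 a] sum_ind_one[of a "\<lambda>v. same K (xp 0 v) []"] a0 a(1) m1(3)
          same_K[OF c0(1)] same_Nil by simp
      moreover have "cnt K h 0 [] (xp 0 a) = 0"
      proof -
        have "\<not> same K (xp 0 v) h" if v: "v < a" for v
        proof
          assume "same K (xp 0 v) h"
          then have "same K (xp 0 a) (xp 0 v)" using a(2) same_rcos c0 h(1) by metis
          then have "xp 0 (a - v) \<in> K" using same_iff[OF c0(1) c0(1)] xp_div[of 0 v a] v n2 by simp
          then show False using m1(3) v a(1) by auto
        qed
        then show ?thesis using cnt_rep[of K h 0 0 a] by simp
      qed
      ultimately show ?thesis using kK by (intro bexI[of _ k] exI[of _ 0]) auto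
    qed
  qed
qed

end


context fgk
begin

lemma Nil_K': "[] \<in> K"
  using subgroup.one_closed[OF sub] by simp

lemma kill_derived:
  assumes add: "\<And>a b. a \<in> K \<Longrightarrow> b \<in> K \<Longrightarrow> f (a \<otimes>\<^bsub>G\<^esub> b) = f a + f b"
    and d: "d \<in> derived (G\<lparr>carrier := K\<rparr>) K"
  shows "f d = (0::int) \<and> d \<in> K"
proof -
  let ?H = "G\<lparr>carrier := K\<rparr>"
  interpret H: group ?H using subgroup.subgroup_is_group[OF sub group_fg] .
  have cH: "carrier ?H = K" by simp
  have mH: "a \<otimes>\<^bsub>?H\<^esub> b = a \<otimes>\<^bsub>G\<^esub> b" for a b by simp
  have oH: "\<one>\<^bsub>?H\<^esub> = []" by simp
  have f0: "f [] = 0"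
  proof -
    have "f ([] \<otimes>\<^bsub>G\<^esub> []) = f [] + f []" using add[OF Nil_K' Nil_K'] .
    moreover have "[] \<otimes>\<^bsub>G\<^esub> [] = []" by (simp add: mult_fg)
    ultimately show ?thesis by simp
  qed
  have fi: "inv\<^bsub>?H\<^esub> a \<in> K \<and> f (inv\<^bsub>?H\<^esub> a) = - f a" if a: "a \<in> K" for a
  proof -
    have ai: "inv\<^bsub>?H\<^esub> a \<in> K" using H.inv_closed[of a] a by simp
    have "a \<otimes>\<^bsub>?H\<^esub> inv\<^bsub>?H\<^esub> a = \<one>\<^bsub>?H\<^esub>" using H.r_inv[of a] a by simp
    then have "a \<otimes>\<^bsub>G\<^esub> inv\<^bsub>?H\<^esub> a = []" by (simp only: mH oH)
    then show ?thesis using add[OF a ai] f0 ai by simp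
  qed
  have mc: "a \<otimes>\<^bsub>G\<^esub> b \<in> K" if "a \<in> K" "b \<in> K" for a b
    using subgroup.m_closed[OF sub that] .
  have comm: "f h = 0 \<and> h \<in> K" if h: "h \<in> derived_set ?H K" for h
  proof -
    obtain h1 h2 where hh: "h1 \<in> K" "h2 \<in> K"
      "h = h1 \<otimes>\<^bsub>?H\<^esub> h2 \<otimes>\<^bsub>?H\<^esub> inv\<^bsub>?H\<^esub> h1 \<otimes>\<^bsub>?H\<^esub> inv\<^bsub>?H\<^esub> h2"
      using h by blast
    have i1: "inv\<^bsub>?H\<^esub> h1 \<in> K" "f (inv\<^bsub>?H\<^esub> h1) = - f h1" using fi[OF hh(1)] by auto
    have i2: "inv\<^bsub>?H\<^esub> h2 \<in> K" "f (inv\<^bsub>?H\<^esub> h2) = - f h2" using fi[OF hh(2)] by auto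
    have e: "h = h1 \<otimes>\<^bsub>G\<^esub> h2 \<otimes>\<^bsub>G\<^esub> inv\<^bsub>?H\<^esub> h1 \<otimes>\<^bsub>G\<^esub> inv\<^bsub>?H\<^esub> h2"
      using hh(3) by (simp only: mH)
    have k12: "h1 \<otimes>\<^bsub>G\<^esub> h2 \<in> K" using mc hh by blast
    have k123: "h1 \<otimes>\<^bsub>G\<^esub> h2 \<otimes>\<^bsub>G\<^esub> inv\<^bsub>?H\<^esub> h1 \<in> K" using mc[OF k12 i1(1)] .
    have "f h = f h1 + f h2 + f (inv\<^bsub>?H\<^esub> h1) + f (inv\<^bsub>?H\<^esub> h2)"
      unfolding e using add[OF k123 i2(1)] add[OF k12 i1(1)] add[OF hh(1) hh(2)] by simp
    moreover have "h \<in> K" unfolding e using mc[OF k123 i2(1)] .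
    ultimately show ?thesis using i1 i2 by simp
  qed
  have "d \<in> generate ?H (derived_set ?H K)" using d by (simp add: derived_def)
  then show ?thesis
  proof (induction rule: generate.induct)
    case one then show ?case using f0 Nil_K' by simp
  next
    case (incl h) then show ?case using comm by blast
  next
    case (inv h)
    have "h \<in> K" "f h = 0" using comm[OF inv] by auto
    then show ?case using fi by auto
  next
    case (eng h1 h2)
    then show ?case using add mc by simp
  qed
qed

lemma cnt_phi:
  assumes phi: "\<phi> \<in> hom G G" and phiK: "\<phi> ` K \<subseteq> K"
    and ind: "induced_ab_endo G K \<phi> = (\<lambda>C \<in> carrier (abelianization (G\<lparr>carrier := K\<rparr>)). C)"
    and k: "k \<in> K" and c: "c \<in> carrier G"
  shows "cnt K c j [] (\<phi> k) = cnt K c j [] k"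
proof -
  let ?H = "G\<lparr>carrier := K\<rparr>"
  define D where "D = derived ?H (carrier ?H)"
  have DK: "D = derived ?H K" by (simp add: D_def)
  define f where "f = cnt K c j []"
  have pK: "\<phi> a \<in> K" if "a \<in> K" for a using phiK that by blast
  have pm: "\<phi> (a \<otimes>\<^bsub>G\<^esub> b) = \<phi> a \<otimes>\<^bsub>G\<^esub> \<phi> b" if "a \<in> K" "b \<in> K" for a b
    using hom_mult[OF phi K_carrier[OF that(1)] K_carrier[OF that(2)]] .
  have fadd: "f (a \<otimes>\<^bsub>G\<^esub> b) = f a + f b" if "a \<in> K" "b \<in> K" for a b
    unfolding f_def using chi_add[OF that c] .
  have gadd: "f (\<phi> (a \<otimes>\<^bsub>G\<^esub> b)) = f (\<phi> a) + f (\<phi> b)" if "a \<in> K" "b \<in> K" for a b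
    using pm[OF that] fadd[OF pK[OF that(1)] pK[OF that(2)]] by simp
  have kd: "f d = 0 \<and> d \<in> K" if "d \<in> D" for d
    using kill_derived[of f d] fadd that DK by blast
  have kd2: "f (\<phi> d) = 0" if "d \<in> D" for d
    using kill_derived[of "\<lambda>x. f (\<phi> x)" d] gadd that DK by blast
  have ND: "[] \<in> D" unfolding D_def derived_def using generate.one[of ?H] by simp
  define C where "C = D #>\<^bsub>?H\<^esub> k"
  have Cc: "C \<in> carrier (abelianization ?H)"
    unfolding C_def abelianization_def FactGroup_def RCOSETS_def D_def using k by auto
  have Cmem: "x \<in> C \<longleftrightarrow> (\<exists>d\<in>D. x = d \<otimes>\<^bsub>G\<^esub> k)" for x
    unfolding C_def r_coset_def by auto
  have "k = [] \<otimes>\<^bsub>G\<^esub> k" using Nil_mult[OF K_carrier[OF k]] by simp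
  then have kC: "k \<in> C" using Cmem ND by blast
  define k' where "k' = (SOME x. x \<in> C)"
  have k'C: "k' \<in> C" unfolding k'_def using kC by (rule someI)
  have "induced_ab_endo G K \<phi> C = C" using ind Cc by simp
  then have eq: "D #>\<^bsub>?H\<^esub> \<phi> k' = C"
    using Cc by (simp add: induced_ab_endo_def Let_def D_def k'_def)
  obtain d where d: "d \<in> D" "k' = d \<otimes>\<^bsub>G\<^esub> k" using k'C Cmem by blast
  have dK: "d \<in> K" using kd[OF d(1)] by blast
  have k'K: "k' \<in> K" using d dK k subgroup.m_closed[OF sub] by simp
  have "\<phi> k' \<in> C"
  proof -
    have "\<phi> k' \<in> carrier G" using hom_in_carrier[OF phi K_carrier[OF k'K]] .
    then have "[] \<otimes>\<^bsub>G\<^esub> \<phi> k' = \<phi> k'" by simp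
    then have "\<phi> k' \<in> D #>\<^bsub>?H\<^esub> \<phi> k'" unfolding r_coset_def using ND by force
    then show ?thesis using eq by simp
  qed
  then obtain d' where d': "d' \<in> D" "\<phi> k' = d' \<otimes>\<^bsub>G\<^esub> k" using Cmem by blast
  have "f (\<phi> k') = f (\<phi> k)" using gadd[OF dK k] kd2[OF d(1)] d(2) by simp
  moreover have "f (\<phi> k') = f k" using fadd[OF _ k, of d'] kd[OF d'(1)] d'(2) by simp
  ultimately show ?thesis unfolding f_def by simp
qed

end

context fgkn
begin

lemma main_i:
  assumes fi: "finite (rcosets\<^bsub>G\<^esub> K)" and n2: "2 \<le> n"
    and phi: "\<phi> \<in> hom G G" and phiK: "\<phi> ` K \<subseteq> K"
    and inv: "\<And>k c j. k \<in> K \<Longrightarrow> c \<in> carrier G \<Longrightarrow> cnt K c j [] (\<phi> k) = cnt K c j [] k"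
    and g: "g \<in> carrier G"
  shows "inv\<^bsub>G\<^esub> (\<phi> g) \<otimes>\<^bsub>G\<^esub> g \<in> K"
proof (rule ccontr)
  interpret P: group_hom G G \<phi> by (simp add: group_hom_def group_hom_axioms_def phi G.group_axioms)
  define h where "h = inv\<^bsub>G\<^esub> (\<phi> g) \<otimes>\<^bsub>G\<^esub> g"
  assume hn': "inv\<^bsub>G\<^esub> (\<phi> g) \<otimes>\<^bsub>G\<^esub> g \<notin> K"
  have hn: "h \<notin> K" using hn' by (simp add: h_def)
  have pg: "\<phi> g \<in> carrier G" using g by simp
  have hc: "h \<in> carrier G" using g pg by (simp add: h_def)
  obtain k0 j where k0: "k0 \<in> K" "cnt K [] j [] k0 \<noteq> cnt K h j [] k0"
    using combinatorial[OF fi n2 hc hn] by blast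
  have k0c: "k0 \<in> carrier G" using K_carrier[OF k0(1)] .
  have pk: "\<phi> k0 \<in> K" using phiK k0(1) by blast
  have pkc: "\<phi> k0 \<in> carrier G" using K_carrier[OF pk] .
  have E1: "cnt K g j g k0 = cnt K [] j [] k0"
    using translate[OF g g carrier_letters[OF k0c], of j] g by simp
  have ck: "g \<otimes>\<^bsub>G\<^esub> k0 \<otimes>\<^bsub>G\<^esub> inv\<^bsub>G\<^esub> g \<in> K" using cc[OF g k0(1)] .
  have "cnt K g j g k0 = cnt K g j [] (g \<otimes>\<^bsub>G\<^esub> k0 \<otimes>\<^bsub>G\<^esub> inv\<^bsub>G\<^esub> g)"
    using conj_cnt[OF g k0(1) g] by simp
  also have "\<dots> = cnt K g j [] (\<phi> (g \<otimes>\<^bsub>G\<^esub> k0 \<otimes>\<^bsub>G\<^esub> inv\<^bsub>G\<^esub> g))"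
    using inv[OF ck g] by simp
  also have "\<phi> (g \<otimes>\<^bsub>G\<^esub> k0 \<otimes>\<^bsub>G\<^esub> inv\<^bsub>G\<^esub> g) = \<phi> g \<otimes>\<^bsub>G\<^esub> \<phi> k0 \<otimes>\<^bsub>G\<^esub> inv\<^bsub>G\<^esub> (\<phi> g)"
    using g k0c by simp
  also have "cnt K g j [] (\<phi> g \<otimes>\<^bsub>G\<^esub> \<phi> k0 \<otimes>\<^bsub>G\<^esub> inv\<^bsub>G\<^esub> (\<phi> g)) = cnt K g j (\<phi> g) (\<phi> k0)"
    using conj_cnt[OF pg pk g] .
  also have "\<dots> = cnt K h j [] (\<phi> k0)"
    using translate[OF pg g carrier_letters[OF pkc], of j] by (simp add: h_def)
  also have "\<dots> = cnt K h j [] k0" using inv[OF k0(1) hc] .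
  finally show False using E1 k0(2) by simp
qed

end



lemma conj_hom:
  assumes x: "x \<in> carrier (free_group n)"
  shows "(\<lambda>y. x \<otimes>\<^bsub>free_group n\<^esub> y \<otimes>\<^bsub>free_group n\<^esub> inv\<^bsub>free_group n\<^esub> x) \<in> hom (free_group n) (free_group n)"
proof -
  interpret G: group "free_group n" by (rule group_fg)
  have ic: "inv\<^bsub>free_group n\<^esub> x \<otimes>\<^bsub>free_group n\<^esub> (x \<otimes>\<^bsub>free_group n\<^esub> z) = z" if "z \<in> carrier (free_group n)" for z
    using x that by (simp add: G.m_assoc[symmetric] del: mult_fg one_fg)
  show ?thesis
    by (rule homI) (use x ic in \<open>simp_all add: G.m_assoc del: mult_fg one_fg\<close>)
qed

theorem mainTheorem8:
  fixes n :: nat and I :: "'i set" and K :: "'i \<Rightarrow> gen list set"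
    and \<phi> :: "gen list \<Rightarrow> gen list"
  assumes "n \<ge> 2"
    and "\<forall>i\<in>I. fully_characteristic (free_group n) (K i) \<and> finite_index (free_group n) (K i)"
    and "(\<Inter>i\<in>I. K i) = {\<one>\<^bsub>free_group n\<^esub>}"
    and "\<phi> \<in> hom (free_group n) (free_group n)"
    and "\<exists>w\<in>carrier (free_group n). \<phi> w \<noteq> w"
  shows "\<exists>i\<in>I. induced_ab_endo (free_group n) (K i) \<phi>
              \<noteq> (\<lambda>C \<in> carrier (abelianization ((free_group n)\<lparr>carrier := K i\<rparr>)). C)"
proof (rule ccontr)
  interpret G: group "free_group n" by (rule group_fg)
  assume nc: "\<not> ?thesis"
  obtain w where w: "w \<in> carrier (free_group n)" "\<phi> w \<noteq> w" using assms(5) by blast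
  have pw: "\<phi> w \<in> carrier (free_group n)" using hom_in_carrier[OF assms(4) w(1)] .
  have mem: "inv\<^bsub>free_group n\<^esub> (\<phi> w) \<otimes>\<^bsub>free_group n\<^esub> w \<in> K i" if i: "i \<in> I" for i
  proof -
    have fc: "fully_characteristic (free_group n) (K i)" and fi: "finite_index (free_group n) (K i)"
      using assms(2) i by auto
    have sub: "subgroup (K i) (free_group n)" using fc by (simp add: fully_characteristic_def)
    have inv_all: "\<psi> ` K i \<subseteq> K i" if "\<psi> \<in> hom (free_group n) (free_group n)" for \<psi>
      using fc that by (simp add: fully_characteristic_def)
    interpret fgkn n "K i"
      apply (rule fgkn.intro)
       apply (rule fgk.intro, rule sub)
      apply (rule fgkn_axioms.intro)
      subgoal premises p for x h using inv_all[OF conj_hom[OF p(1)]] p(2) by blast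
      done
    have eq: "induced_ab_endo (free_group n) (K i) \<phi>
              = (\<lambda>C \<in> carrier (abelianization ((free_group n)\<lparr>carrier := K i\<rparr>)). C)"
      using nc i by blast
    show ?thesis
    proof (rule main_i)
      show "finite (rcosets\<^bsub>free_group n\<^esub> K i)" using fi by (simp add: finite_index_def)
      show "2 \<le> n" using assms(1) .
      show "\<phi> \<in> hom (free_group n) (free_group n)" by (rule assms(4))
      show "\<phi> ` K i \<subseteq> K i" by (rule inv_all[OF assms(4)])
      show "w \<in> carrier (free_group n)" by (rule w(1))
      fix k c j assume "k \<in> K i" "c \<in> carrier (free_group n)"
      then show "cnt (K i) c j [] (\<phi> k) = cnt (K i) c j [] k"
        using cnt_phi[OF assms(4) inv_all[OF assms(4)] eq] by blast
    qed
  qed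
  have "inv\<^bsub>free_group n\<^esub> (\<phi> w) \<otimes>\<^bsub>free_group n\<^esub> w \<in> (\<Inter>i\<in>I. K i)" using mem by blast
  then have e: "inv\<^bsub>free_group n\<^esub> (\<phi> w) \<otimes>\<^bsub>free_group n\<^esub> w = \<one>\<^bsub>free_group n\<^esub>"
    using assms(3) by blast
  have "w = \<phi> w \<otimes>\<^bsub>free_group n\<^esub> (inv\<^bsub>free_group n\<^esub> (\<phi> w) \<otimes>\<^bsub>free_group n\<^esub> w)"
    using pw w(1) by (simp add: G.m_assoc[symmetric] del: mult_fg one_fg)
  also have "\<dots> = \<phi> w" using e pw by (simp del: mult_fg one_fg)
  finally show False using w(2) by simp
qed


end
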